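(* Let $m$ be the normalized Lebesgue measure on $[-\pi,\pi]^N$ and for $(\theta_i^0)\in[-\pi,\pi]^N$ let $R_0=\frac1N\sum_{j=1}^N(1+\cos\theta_j^0)$. For every $t\in(0,1)$, \[ m\{(\theta_i^0)\in[-\pi,\pi]^N: R_0\le t\}\le\min\left\{\exp\big(-(1-t)^2N\big),\ \Big(\frac{\sqrt{\pi et}}{2}\Big)^N\right\}. \] *)

theory Defs
  imports "HOL-Analysis.Analysis"
begin

definition cube_measure :: "nat \<Rightarrow> (nat \<Rightarrow> real) measure" where
  "cube_measure N = PiM {1..N} (\<lambda>_. uniform_measure lborel {-pi..pi})"

definition R0 :: "nat \<Rightarrow> (nat \<Rightarrow> real) \<Rightarrow> real" where
  "R0 N \<theta> = (1 / real N) * (\<Sum>j=1..N. 1 + cos (\<theta> j))"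

end

theory Submission
  imports Defs "HOL-Probability.Probability"
begin

lemma fact_double_ge: "2 ^ k * fact k \<le> (fact (2 * k) :: real)"
proof (induction k)
  case 0 then show ?case by simp
next
  case (Suc k)
  have e1: "(fact (2 * Suc k) :: real) = fact (2*k) * ((2*real k+1) * (2*real k+2))"
    by (simp add: algebra_simps)
  have e2: "2 ^ Suc k * fact (Suc k) = (2^k * fact k :: real) * (2*real k+2)"
    by (simp add: algebra_simps)
  have i3: "(2^k * fact k :: real) * (2*real k+2) \<le> fact (2*k) * ((2*real k+1) * (2*real k+2))"
  proof -
    have "(2^k * fact k :: real) \<le> fact (2*k)" by (rule Suc)
    also have "\<dots> \<le> fact (2*k) * (2*real k+1)" by (simp add: algebra_simps)
    finally have "(2^k * fact k :: real) \<le> fact (2*k) * (2*real k+1)" .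
    then have "(2^k * fact k :: real) * (2*real k+2) \<le> (fact (2*k) * (2*real k+1)) * (2*real k+2)"
      by (rule mult_right_mono) simp
    then show ?thesis by (simp add: mult.assoc)
  qed
  show ?case unfolding e1 e2 by (rule i3)
qed


lemma cosh_le_exp_sq: "cosh (x::real) \<le> exp (x^2/2)"
proof -
  define y where "y = x^2/2"
  have y0: "0 \<le> y" by (simp add: y_def)
  have x2: "x^2 = 2*y" by (simp add: y_def)
  let ?f = "\<lambda>n. if even n then y^(n div 2) / fact (n div 2) else (0::real)"
  have "(\<lambda>k. y^k /\<^sub>R fact k) sums exp y" by (rule exp_converges)
  moreover have "(\<lambda>k. y^k /\<^sub>R fact k) = (\<lambda>k. ?f (2*k))" by (simp add: divide_inverse_commute)
  ultimately have s0: "(\<lambda>k. ?f (2*k)) sums exp y" by simp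
  have s: "?f sums exp y"
  proof -
    have "strict_mono (\<lambda>k::nat. 2*k)" by (simp add: strict_mono_def)
    moreover have "\<And>n. n \<notin> range (\<lambda>k::nat. 2*k) \<Longrightarrow> ?f n = 0" by auto
    ultimately show ?thesis using sums_mono_reindex[of "\<lambda>k. 2*k" ?f] s0 by blast
  qed
  have "cosh x \<le> exp y"
  proof (rule sums_le[OF _ cosh_converges s])
    fix n show "(if even n then x ^ n /\<^sub>R fact n else 0) \<le> ?f n"
    proof (cases "even n")
      case True
      then obtain k where n: "n = 2*k" by blast
      have "x ^ n = (x^2)^k" by (simp add: n power_mult)
      also have "\<dots> = (2*y)^k" by (simp only: x2)
      also have "\<dots> = 2^k * y^k" by (rule power_mult_distrib)
      finally have xn: "x ^ n = 2^k * y^k" .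
      have "x ^ n /\<^sub>R fact n = 2^k * y^k / fact n" by (simp add: xn divide_inverse_commute)
      also have "\<dots> = 2^k * y^k / fact (2*k)" by (simp only: n)
      also have "\<dots> \<le> 2^k * y^k / (2^k * fact k)"
        using y0 by (intro divide_left_mono fact_double_ge) auto
      also have "\<dots> = y^k / fact k" by simp
      finally show ?thesis using True n by simp
    qed simp
  qed
  then show ?thesis by (simp add: y_def)
qed

lemma cosh_interp:
  fixes l c :: real assumes "\<bar>c\<bar> \<le> 1"
  shows "cosh (l*c) \<le> 1 + c^2 * (cosh l - 1)"
proof -
  let ?g = "\<lambda>n. (if n = 0 then 1 - c^2 else 0) + c^2 * (if even n then l ^ n /\<^sub>R fact n else 0)"
  have s: "?g sums ((1 - c^2) + c^2 * cosh l)"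
    by (intro sums_add sums_mult cosh_converges) (simp add: sums_single[of 0 "\<lambda>_. 1 - c^2", simplified])
  have "cosh (l*c) \<le> (1 - c^2) + c^2 * cosh l"
  proof (rule sums_le[OF _ cosh_converges s])
    fix n show "(if even n then (l*c) ^ n /\<^sub>R fact n else 0) \<le> ?g n"
    proof (cases "even n \<and> n \<noteq> 0")
      case True
      then obtain k where n: "n = 2*k" and k: "k \<ge> 1" by (auto elim!: evenE)
      have c2: "0 \<le> c^2" "c^2 \<le> 1" using assms by (auto simp: abs_square_le_1)
      have "c ^ n = (c^2)^k" by (simp add: n power_mult)
      also have "\<dots> \<le> c^2" using c2 k by (simp add: power_le_one power_decreasing[of 1 k "c^2", simplified])
      finally have cn: "c^n \<le> c^2" .
      have ln: "0 \<le> l^n" using True by (simp add: zero_le_even_power)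
      have "(l*c)^n / fact n = c^n * (l^n / fact n)" by (simp add: power_mult_distrib)
      also have "\<dots> \<le> c^2 * (l^n / fact n)" using cn ln by (intro mult_right_mono) auto
      finally show ?thesis using True by (simp add: divide_inverse)
    next
      case False
      then show ?thesis by auto
    qed
  qed
  then show ?thesis by (simp add: algebra_simps)
qed

lemma jordan: assumes "0 \<le> y" "y \<le> pi" shows "2 * y^2 / pi^2 \<le> 1 - cos y"
proof -
  have conc: "concave_on {0..pi} sin"
    by (rule f''_le0_imp_concave[where f' = cos and f'' = "\<lambda>x. - sin x"])
       (auto intro!: derivative_eq_intros sin_ge_zero)
  define s where "s = y / pi"
  have s: "0 \<le> s" "s \<le> 1" using assms pi_gt_zero by (auto simp: s_def)
  have "(1 - s) * sin 0 + s * sin (pi/2) \<le> sin ((1 - s) *\<^sub>R 0 + s *\<^sub>R (pi/2))"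
    by (rule concave_onD[OF conc]) (use s in auto)
  then have "s \<le> sin (y/2)" by (simp add: s_def)
  then have "s^2 \<le> sin (y/2) ^ 2" using s by (intro power_mono) auto
  moreover have "cos y = 1 - 2 * sin (y/2)^2" using cos_double_sin[of "y/2"] by simp
  ultimately show ?thesis by (simp add: s_def power_divide)
qed




lemma cos2_int:
  fixes l :: real assumes "0 \<le> l"
  shows "(\<integral>\<^sup>+x. ennreal (2*(1 + (cos x)^2*(cosh l - 1))) * indicator {0..pi} x \<partial>lborel)
         = ennreal (pi*(1+cosh l))"
proof -
  define F where "F x = 2*x + (cosh l - 1)*(x + sin(2*x)/2)" for x :: real
  have cl: "1 \<le> cosh l" by (rule cosh_real_ge_1)
  have "(\<integral>\<^sup>+x. ennreal (2*(1 + (cos x)^2*(cosh l - 1))) * indicator {0..pi} x \<partial>lborel) = F pi - F 0"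
  proof (rule nn_integral_FTC_Icc)
    show "(\<lambda>x. 2*(1 + (cos x)^2*(cosh l - 1))) \<in> borel_measurable borel" by measurable
    fix x :: real
    show "0 \<le> 2*(1 + (cos x)^2*(cosh l - 1))" using cl by (simp add: add_nonneg_nonneg)
    have "(F has_real_derivative (2 + (cosh l - 1) * (1 + cos (2*x)))) (at x)"
      unfolding F_def by (auto intro!: derivative_eq_intros simp: field_simps)
    moreover have "2 + (cosh l - 1) * (1 + cos (2*x)) = 2*(1 + (cos x)^2*(cosh l - 1))"
      unfolding cos_double_cos by (simp add: algebra_simps)
    ultimately show "(F has_real_derivative 2*(1 + (cos x)^2*(cosh l - 1))) (at x)" by simp
  qed simp
  also have "F pi - F 0 = pi*(1+cosh l)" by (simp add: F_def algebra_simps)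
  finally show ?thesis .
qed

lemma half_int_A:
  fixes l :: real assumes l: "0 \<le> l"
  shows "(\<integral>\<^sup>+x. ennreal (exp (-l*cos x)) * indicator {-pi..pi} x \<partial>lborel) \<le> ennreal (pi*(1+cosh l))"
proof -
  have "(\<integral>\<^sup>+x. ennreal (exp (-l*cos x)) * indicator {-pi..pi} x \<partial>lborel)
      \<le> (\<integral>\<^sup>+x. ennreal (exp (-l*cos x)) * indicator {-pi..0} x + ennreal (exp (-l*cos x)) * indicator {0..pi} x \<partial>lborel)"
    by (intro nn_integral_mono) (auto split: split_indicator)
  also have "\<dots> = (\<integral>\<^sup>+x. ennreal (exp (-l*cos x)) * indicator {-pi..0} x \<partial>lborel)
                 + (\<integral>\<^sup>+x. ennreal (exp (-l*cos x)) * indicator {0..pi} x \<partial>lborel)"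
    by (rule nn_integral_add) auto
  also have "(\<integral>\<^sup>+x. ennreal (exp (-l*cos x)) * indicator {-pi..0} x \<partial>lborel)
           = (\<integral>\<^sup>+x. ennreal (exp (l*cos x)) * indicator {0..pi} x \<partial>lborel)"
    by (subst nn_integral_real_affine[where c=1 and t="-pi"])
       (auto intro!: nn_integral_cong split: split_indicator)
  also have "(\<integral>\<^sup>+x. ennreal (exp (l*cos x)) * indicator {0..pi} x \<partial>lborel)
                 + (\<integral>\<^sup>+x. ennreal (exp (-l*cos x)) * indicator {0..pi} x \<partial>lborel)
           = (\<integral>\<^sup>+x. ennreal (exp (l*cos x)) * indicator {0..pi} x + ennreal (exp (-l*cos x)) * indicator {0..pi} x \<partial>lborel)"
    by (rule nn_integral_add[symmetric]) auto
  also have "\<dots> \<le> (\<integral>\<^sup>+x. ennreal (2*(1 + (cos x)^2*(cosh l - 1))) * indicator {0..pi} x \<partial>lborel)"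
  proof (intro nn_integral_mono)
    fix x :: real
    have "exp (l*cos x) + exp (-l*cos x) = 2 * cosh (l * cos x)"
      by (simp add: cosh_field_def)
    also have "\<dots> \<le> 2*(1 + (cos x)^2*(cosh l - 1))"
      using cosh_interp[of "cos x" l] by simp
    finally have "ennreal (exp (l*cos x)) + ennreal (exp (-l*cos x)) \<le> ennreal (2*(1 + (cos x)^2*(cosh l - 1)))"
      by (simp add: ennreal_plus[symmetric] ennreal_leI del: ennreal_plus)
    then show "ennreal (exp (l*cos x)) * indicator {0..pi} x + ennreal (exp (-l*cos x)) * indicator {0..pi} x
        \<le> ennreal (2*(1 + (cos x)^2*(cosh l - 1))) * indicator {0..pi} x"
      by (auto split: split_indicator)
  qed
  also have "\<dots> = ennreal (pi*(1+cosh l))" by (rule cos2_int[OF l])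
  finally show ?thesis .
qed

lemma gauss_half:
  fixes a :: real assumes a: "0 < a"
  shows "(\<integral>\<^sup>+x. ennreal (exp (-a*x^2)) * indicator {0..} x \<partial>lborel) = ennreal (sqrt (pi/a)/2)"
proof -
  have g: "(\<integral>\<^sup>+x. ennreal (exp (- (x\<^sup>2))) * indicator {0..} x \<partial>lborel) = ennreal (sqrt pi / 2)"
  proof -
    have h: "has_bochner_integral lborel (\<lambda>x. indicator {0..} x *\<^sub>R exp (- (x\<^sup>2))) (sqrt pi / 2)"
      by (rule gaussian_moment_0)
    have "(\<integral>\<^sup>+x. ennreal (indicator {0..} x *\<^sub>R exp (- (x\<^sup>2))) \<partial>lborel) = ennreal (integral\<^sup>L lborel (\<lambda>x. indicator {0..} x *\<^sub>R exp (- (x\<^sup>2))))"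
      by (rule nn_integral_eq_integral[OF integrable.intros[OF h]]) auto
    also have "\<dots> = ennreal (sqrt pi / 2)" using has_bochner_integral_integral_eq[OF h] by simp
    finally show ?thesis
      by (subst (asm) nn_integral_cong[where v="\<lambda>x. ennreal (exp (- (x\<^sup>2))) * indicator {0..} x"])
         (auto split: split_indicator)
  qed
  have sa: "0 < sqrt a" using a by simp
  have "(\<integral>\<^sup>+x. ennreal (exp (-a*x^2)) * indicator {0..} x \<partial>lborel)
       = \<bar>1 / sqrt a\<bar> * (\<integral>\<^sup>+x. ennreal (exp (-a*(0 + (1/sqrt a) * x)^2)) * indicator {0..} (0 + (1/sqrt a) * x) \<partial>lborel)"
    using sa by (intro nn_integral_real_affine) auto
  also have "(\<integral>\<^sup>+x. ennreal (exp (-a*(0 + (1/sqrt a) * x)^2)) * indicator {0..} (0 + (1/sqrt a) * x) \<partial>lborel)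
       = (\<integral>\<^sup>+x. ennreal (exp (- (x\<^sup>2))) * indicator {0..} x \<partial>lborel)"
  proof (intro nn_integral_cong)
    fix x :: real
    have "a*(0 + (1/sqrt a) * x)^2 = x^2" using a by (simp add: power_mult_distrib power_divide)
    moreover have "(0 \<le> 0 + (1/sqrt a) * x) = (0 \<le> x)" using sa by (simp add: zero_le_divide_iff)
    ultimately show "ennreal (exp (-a*(0 + (1/sqrt a) * x)^2)) * indicator {0..} (0 + (1/sqrt a) * x)
       = ennreal (exp (- (x\<^sup>2))) * indicator {0..} x" by (simp split: split_indicator)
  qed
  also have "\<bar>1 / sqrt a\<bar> = 1 / sqrt a" using sa by simp
  also have "ennreal (1 / sqrt a) * (\<integral>\<^sup>+x. ennreal (exp (- (x\<^sup>2))) * indicator {0..} x \<partial>lborel)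
     = ennreal (1 / sqrt a) * ennreal (sqrt pi / 2)" by (simp only: g)
  also have "\<dots> = ennreal (sqrt (pi/a)/2)"
    using sa by (simp add: ennreal_mult[symmetric] real_sqrt_divide)
  finally show ?thesis .
qed



lemma half_int_C:
  fixes l :: real assumes l: "0 < l"
  shows "(\<integral>\<^sup>+x. ennreal (exp (-l*(1+cos x))) * indicator {-pi..pi} x \<partial>lborel) \<le> ennreal (pi* sqrt(pi/(2*l)))"
proof -
  define a where "a = 2*l/pi^2"
  have a: "0 < a" using l by (simp add: a_def)
  have "(\<integral>\<^sup>+x. ennreal (exp (-l*(1+cos x))) * indicator {-pi..pi} x \<partial>lborel)
      \<le> (\<integral>\<^sup>+x. ennreal (exp (-a*(pi+x)^2)) * indicator {-pi..0} x + ennreal (exp (-a*(pi-x)^2)) * indicator {0..pi} x \<partial>lborel)"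
  proof (intro nn_integral_mono)
    fix x :: real
    have A: "exp (-l*(1+cos x)) \<le> exp (-a*(pi+x)^2)" if "-pi \<le> x" "x \<le> 0"
    proof -
      have "2*(pi+x)^2/pi^2 \<le> 1 - cos (pi+x)" using that by (intro jordan) auto
      then have "2*(pi+x)^2/pi^2 \<le> 1 + cos x" by simp
      then have "l * (2*(pi+x)^2/pi^2) \<le> l * (1 + cos x)" using l by (intro mult_left_mono) auto
      moreover have "a*(pi+x)^2 = l * (2*(pi+x)^2/pi^2)" by (simp add: a_def field_simps)
      ultimately have "a*(pi+x)^2 \<le> l * (1 + cos x)" by simp
      then show ?thesis by simp
    qed
    have B: "exp (-l*(1+cos x)) \<le> exp (-a*(pi-x)^2)" if "0 \<le> x" "x \<le> pi"
    proof -
      have "2*(pi-x)^2/pi^2 \<le> 1 - cos (pi-x)" using that by (intro jordan) auto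
      then have "2*(pi-x)^2/pi^2 \<le> 1 + cos x" by simp
      then have "l * (2*(pi-x)^2/pi^2) \<le> l * (1 + cos x)" using l by (intro mult_left_mono) auto
      moreover have "a*(pi-x)^2 = l * (2*(pi-x)^2/pi^2)" by (simp add: a_def field_simps)
      ultimately have "a*(pi-x)^2 \<le> l * (1 + cos x)" by simp
      then show ?thesis by simp
    qed
    show "ennreal (exp (-l*(1+cos x))) * indicator {-pi..pi} x \<le>
       ennreal (exp (-a*(pi+x)^2)) * indicator {-pi..0} x + ennreal (exp (-a*(pi-x)^2)) * indicator {0..pi} x"
    proof (cases "x \<le> 0")
      case True
      then show ?thesis using A by (auto simp: ennreal_leI split: split_indicator intro: add_increasing2)
    next
      case False
      then show ?thesis using B by (auto simp: ennreal_leI split: split_indicator intro: add_increasing)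
    qed
  qed
  also have "\<dots> = (\<integral>\<^sup>+x. ennreal (exp (-a*(pi+x)^2)) * indicator {-pi..0} x \<partial>lborel)
                 + (\<integral>\<^sup>+x. ennreal (exp (-a*(pi-x)^2)) * indicator {0..pi} x \<partial>lborel)"
    by (rule nn_integral_add) auto
  also have "(\<integral>\<^sup>+x. ennreal (exp (-a*(pi+x)^2)) * indicator {-pi..0} x \<partial>lborel)
           = (\<integral>\<^sup>+x. ennreal (exp (-a*x^2)) * indicator {0..pi} x \<partial>lborel)"
    by (subst nn_integral_real_affine[where c=1 and t="-pi"])
       (auto intro!: nn_integral_cong split: split_indicator)
  also have "(\<integral>\<^sup>+x. ennreal (exp (-a*(pi-x)^2)) * indicator {0..pi} x \<partial>lborel)
           = (\<integral>\<^sup>+x. ennreal (exp (-a*x^2)) * indicator {0..pi} x \<partial>lborel)"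
    by (subst nn_integral_real_affine[where c="-1" and t="pi"])
       (auto intro!: nn_integral_cong split: split_indicator)
  also have "(\<integral>\<^sup>+x. ennreal (exp (-a*x^2)) * indicator {0..pi} x \<partial>lborel)
           \<le> (\<integral>\<^sup>+x. ennreal (exp (-a*x^2)) * indicator {0..} x \<partial>lborel)"
    by (intro nn_integral_mono) (auto split: split_indicator)
  also have "\<dots> = ennreal (sqrt (pi/a)/2)" by (rule gauss_half[OF a])
  also have "ennreal (sqrt (pi/a)/2) + ennreal (sqrt (pi/a)/2) = ennreal (pi* sqrt(pi/(2*l)))"
  proof -
    have "pi / a = pi^2 * (pi/(2*l))" using l by (simp add: a_def field_simps power2_eq_square)
    then have "sqrt (pi/a) = sqrt (pi^2) * sqrt (pi/(2*l))" by (simp only: real_sqrt_mult)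
    then have "sqrt (pi/a) = pi * sqrt (pi/(2*l))" by simp
    then show ?thesis using l by (subst ennreal_plus[symmetric]) auto
  qed
  finally show ?thesis by (simp add: add_mono)
qed



lemma chernoff:
  fixes N :: nat and t l B :: real
  assumes N: "N \<ge> 1" and l: "0 \<le> l" and B: "0 \<le> B"
  and I: "(\<integral>\<^sup>+x. ennreal (exp (l*(t-(1+cos x)))) * indicator {-pi..pi} x \<partial>lborel) \<le> ennreal (2*pi*B)"
  shows "measure (cube_measure N) {\<theta> \<in> {1..N} \<rightarrow>\<^sub>E {-pi..pi}. R0 N \<theta> \<le> t} \<le> B^N"
proof -
  define M where "M = uniform_measure lborel {-pi..pi::real}"
  have pM: "prob_space M" unfolding M_def by (intro prob_space_uniform_measure) auto
  interpret PP: product_prob_space "\<lambda>_::nat. M"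
    unfolding product_prob_space_def product_prob_space_axioms_def product_sigma_finite_def
    using pM prob_space_imp_sigma_finite by auto
  have cm: "cube_measure N = PiM {1..N} (\<lambda>_. M)" by (simp add: cube_measure_def M_def)
  interpret P: prob_space "cube_measure N" unfolding cm by (intro prob_space_PiM pM)
  define g where "g x = ennreal (exp (l*(t-(1+cos x))))" for x
  define S' where "S' = {\<theta> \<in> space (cube_measure N). R0 N \<theta> \<le> t}"
  have mc[measurable]: "(\<lambda>x. x j) \<in> borel_measurable (PiM {1..N} (\<lambda>_. M))" if "j \<in> {1..N}" for j
  proof -
    have "(\<lambda>x. x j) \<in> measurable (PiM {1..N} (\<lambda>_. M)) M"
      using that by (rule measurable_component_singleton)
    moreover have "measurable (PiM {1..N} (\<lambda>_. M)) M = measurable (PiM {1..N} (\<lambda>_. M)) borel"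
      by (rule measurable_cong_sets) (auto simp: M_def)
    ultimately show ?thesis by simp
  qed
  have S'sets: "S' \<in> sets (cube_measure N)" unfolding S'_def R0_def cm by measurable
  have sub: "{\<theta> \<in> {1..N} \<rightarrow>\<^sub>E {-pi..pi}. R0 N \<theta> \<le> t} \<subseteq> S'"
    unfolding S'_def cm by (auto simp: space_PiM M_def PiE_def Pi_def)
  have "emeasure (cube_measure N) S' = (\<integral>\<^sup>+\<theta>. indicator S' \<theta> \<partial>cube_measure N)"
    using S'sets by simp
  also have "\<dots> \<le> (\<integral>\<^sup>+\<theta>. (\<Prod>j\<in>{1..N}. g (\<theta> j)) \<partial>cube_measure N)"
  proof (intro nn_integral_mono)
    fix \<theta> assume "\<theta> \<in> space (cube_measure N)"
    show "indicator S' \<theta> \<le> (\<Prod>j\<in>{1..N}. g (\<theta> j))"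
    proof (cases "\<theta> \<in> S'")
      case True
      then have R: "R0 N \<theta> \<le> t" by (simp add: S'_def)
      have Npos: "0 < real N" using N by simp
      have sumeq: "(\<Sum>j=1..N. 1 + cos (\<theta> j)) = real N * R0 N \<theta>"
        using Npos by (simp add: R0_def)
      have "(\<Prod>j\<in>{1..N}. g (\<theta> j)) = ennreal (\<Prod>j\<in>{1..N}. exp (l*(t-(1+cos (\<theta> j)))))"
        unfolding g_def by (rule prod_ennreal) simp
      also have "(\<Prod>j\<in>{1..N}. exp (l*(t-(1+cos (\<theta> j))))) = exp (\<Sum>j\<in>{1..N}. l*(t-(1+cos (\<theta> j))))"
        by (simp add: exp_sum)
      also have "(\<Sum>j\<in>{1..N}. l*(t-(1+cos (\<theta> j)))) = l * (real N * t - (\<Sum>j=1..N. 1 + cos (\<theta> j)))"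
        by (simp add: sum_distrib_left sum_subtractf right_diff_distrib)
      also have "\<dots> = l * (real N * (t - R0 N \<theta>))" unfolding sumeq by (simp add: right_diff_distrib)
      finally have "(\<Prod>j\<in>{1..N}. g (\<theta> j)) = ennreal (exp (l * (real N * (t - R0 N \<theta>))))" .
      moreover have "1 \<le> exp (l * (real N * (t - R0 N \<theta>)))"
        using R l by (simp add: zero_le_mult_iff)
      ultimately show ?thesis using True by (simp add: ennreal_leI)
    qed simp
  qed
  also have "\<dots> = (\<Prod>j\<in>{1..N}. (\<integral>\<^sup>+x. g x \<partial>M))"
  proof -
    have "(borel_measurable M :: (real \<Rightarrow> ennreal) set) = borel_measurable borel" by (rule measurable_cong_sets) (auto simp: M_def)
    moreover have "g \<in> borel_measurable borel" unfolding g_def by measurable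
    ultimately have gm: "g \<in> borel_measurable M" by simp
    show ?thesis unfolding cm by (rule PP.product_nn_integral_prod) (use gm in auto)
  qed
  also have "\<dots> = (\<integral>\<^sup>+x. g x \<partial>M) ^ N" by simp
  also have "(\<integral>\<^sup>+x. g x \<partial>M) \<le> ennreal B"
  proof -
    have "(\<integral>\<^sup>+x. g x \<partial>M) = (\<integral>\<^sup>+x. g x * indicator {-pi..pi} x \<partial>lborel) / emeasure lborel {-pi..pi}"
      unfolding M_def by (rule nn_integral_uniform_measure) (auto simp: g_def)
    also have "emeasure lborel {-pi..pi} = ennreal (2*pi)" by simp
    also have "(\<integral>\<^sup>+x. g x * indicator {-pi..pi} x \<partial>lborel) / ennreal (2*pi) \<le> ennreal (2*pi*B) / ennreal (2*pi)"
      using I unfolding g_def by (rule divide_right_mono_ennreal)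
    also have "\<dots> = ennreal B" using B by (simp add: divide_ennreal)
    finally show ?thesis .
  qed
  then have "(\<integral>\<^sup>+x. g x \<partial>M) ^ N \<le> ennreal B ^ N" by (rule power_mono) simp
  also have "\<dots> = ennreal (B ^ N)" using B by (simp add: ennreal_power)
  finally have "emeasure (cube_measure N) S' \<le> ennreal (B^N)" by simp
  then have "measure (cube_measure N) S' \<le> B^N"
    using B by (simp add: P.emeasure_eq_measure ennreal_le_iff)
  moreover have "measure (cube_measure N) {\<theta> \<in> {1..N} \<rightarrow>\<^sub>E {-pi..pi}. R0 N \<theta> \<le> t} \<le> measure (cube_measure N) S'"
    by (rule P.finite_measure_mono[OF sub S'sets])
  ultimately show ?thesis by linarith
qed



lemma bound1:
  fixes N :: nat and t :: real
  assumes "N \<ge> 1" and "0 < t" and "t < 1"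
  shows "measure (cube_measure N) {\<theta> \<in> {1..N} \<rightarrow>\<^sub>E {-pi..pi}. R0 N \<theta> \<le> t} \<le> exp (- ((1 - t)^2 * real N))"
proof -
  define s where "s = 1 - t"
  define l where "l = 2 * s"
  have s: "0 < s" using assms by (simp add: s_def)
  have l: "0 \<le> l" using s by (simp add: l_def)
  have "(\<integral>\<^sup>+x. ennreal (exp (l*(t-(1+cos x)))) * indicator {-pi..pi} x \<partial>lborel)
      = (\<integral>\<^sup>+x. ennreal (exp (-l * s)) * (ennreal (exp (-l*cos x)) * indicator {-pi..pi} x) \<partial>lborel)"
  proof (intro nn_integral_cong)
    fix x :: real
    have "exp (l*(t-(1+cos x))) = exp (-l * s) * exp (-l*cos x)"
      by (simp add: s_def exp_add[symmetric] algebra_simps)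
    then show "ennreal (exp (l*(t-(1+cos x)))) * indicator {-pi..pi} x
      = ennreal (exp (-l * s)) * (ennreal (exp (-l*cos x)) * indicator {-pi..pi} x)"
      by (simp add: ennreal_mult mult.assoc)
  qed
  also have "\<dots> = ennreal (exp (-l * s)) * (\<integral>\<^sup>+x. ennreal (exp (-l*cos x)) * indicator {-pi..pi} x \<partial>lborel)"
    by (rule nn_integral_cmult) auto
  also have "\<dots> \<le> ennreal (exp (-l * s)) * ennreal (pi*(1+cosh l))"
    by (intro mult_left_mono half_int_A l) auto
  also have "\<dots> = ennreal (exp (-l * s) * (pi*(1+cosh l)))"
    using cosh_real_ge_1[of l] by (simp add: ennreal_mult)
  also have "\<dots> \<le> ennreal (2*pi*exp (-(s^2)))"
  proof (rule ennreal_leI)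
    have c2: "1 + cosh l = 2 * cosh s ^ 2"
      using cosh_double[of s] cosh_square_eq[of s] by (simp add: l_def)
    have cs: "cosh s \<le> exp (s^2/2)" by (rule cosh_le_exp_sq)
    have "cosh s ^ 2 \<le> exp (s^2/2) ^ 2"
      using cs cosh_real_pos[of s] by (intro power_mono) auto
    also have "exp (s^2/2) ^ 2 = exp (s^2)" by (simp add: power2_eq_square exp_add[symmetric])
    finally have "1 + cosh l \<le> 2 * exp (s^2)" using c2 by simp
    then have "exp (-l * s) * (pi*(1+cosh l)) \<le> exp (-l * s) * (pi*(2 * exp (s^2)))"
      by (intro mult_left_mono) auto
    also have "\<dots> = 2*pi*exp (-(s^2))"
      by (simp add: l_def exp_add[symmetric] power2_eq_square mult_exp_exp algebra_simps)
    finally show "exp (-l * s) * (pi*(1+cosh l)) \<le> 2*pi*exp (-(s^2))" .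
  qed
  finally have I: "(\<integral>\<^sup>+x. ennreal (exp (l*(t-(1+cos x)))) * indicator {-pi..pi} x \<partial>lborel) \<le> ennreal (2*pi*exp (-(s^2)))" .
  have "measure (cube_measure N) {\<theta> \<in> {1..N} \<rightarrow>\<^sub>E {-pi..pi}. R0 N \<theta> \<le> t} \<le> exp (-(s^2)) ^ N"
    by (rule chernoff[OF assms(1) l _ I]) simp
  also have "exp (-(s^2)) ^ N = exp (- ((1 - t)^2 * real N))"
    by (simp add: s_def exp_of_nat_mult[symmetric] mult.commute)
  finally show ?thesis .
qed

lemma bound2:
  fixes N :: nat and t :: real
  assumes "N \<ge> 1" and "0 < t" and "t < 1"
  shows "measure (cube_measure N) {\<theta> \<in> {1..N} \<rightarrow>\<^sub>E {-pi..pi}. R0 N \<theta> \<le> t} \<le> (sqrt (pi * exp 1 * t) / 2) ^ N"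
proof -
  define l where "l = 1 / (2*t)"
  have t: "0 < t" using assms by simp
  have l: "0 < l" using t by (simp add: l_def)
  have "(\<integral>\<^sup>+x. ennreal (exp (l*(t-(1+cos x)))) * indicator {-pi..pi} x \<partial>lborel)
      = (\<integral>\<^sup>+x. ennreal (exp (l*t)) * (ennreal (exp (-l*(1+cos x))) * indicator {-pi..pi} x) \<partial>lborel)"
  proof (intro nn_integral_cong)
    fix x :: real
    have "exp (l*(t-(1+cos x))) = exp (l*t) * exp (-l*(1+cos x))"
      by (simp add: exp_add[symmetric] algebra_simps)
    then show "ennreal (exp (l*(t-(1+cos x)))) * indicator {-pi..pi} x
      = ennreal (exp (l*t)) * (ennreal (exp (-l*(1+cos x))) * indicator {-pi..pi} x)"
      by (simp add: ennreal_mult mult.assoc)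
  qed
  also have "\<dots> = ennreal (exp (l*t)) * (\<integral>\<^sup>+x. ennreal (exp (-l*(1+cos x))) * indicator {-pi..pi} x \<partial>lborel)"
    by (rule nn_integral_cmult) auto
  also have "\<dots> \<le> ennreal (exp (l*t)) * ennreal (pi * sqrt (pi/(2*l)))"
    by (intro mult_left_mono half_int_C l) auto
  also have "\<dots> = ennreal (2*pi*(sqrt (pi * exp 1 * t) / 2))"
  proof -
    have lt: "l*t = 1/2" using t by (simp add: l_def)
    have pl: "pi/(2*l) = pi*t" using t by (simp add: l_def)
    have se: "sqrt (exp 1) = exp (1/2)"
      by (rule real_sqrt_unique) (simp_all add: power2_eq_square exp_add[symmetric])
    have eq: "exp (l*t) * (pi * sqrt (pi/(2*l))) = 2*pi*(sqrt (pi * exp 1 * t) / 2)"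
      unfolding lt pl using se by (simp add: real_sqrt_mult algebra_simps)
    have "ennreal (exp (l*t)) * ennreal (pi * sqrt (pi/(2*l))) = ennreal (exp (l*t) * (pi * sqrt (pi/(2*l))))"
      by (rule ennreal_mult[symmetric]) (use l in auto)
    then show ?thesis by (simp only: eq)
  qed
  finally have I: "(\<integral>\<^sup>+x. ennreal (exp (l*(t-(1+cos x)))) * indicator {-pi..pi} x \<partial>lborel)
      \<le> ennreal (2*pi*(sqrt (pi * exp 1 * t) / 2))" .
  show ?thesis
    by (rule chernoff[OF assms(1) _ _ I]) (use l t in auto)
qed

theorem lemma5p4:
  fixes N :: nat and t :: real
  assumes "N \<ge> 1" and "0 < t" and "t < 1"
  shows "measure (cube_measure N) {\<theta> \<in> {1..N} \<rightarrow>\<^sub>E {-pi..pi}. R0 N \<theta> \<le> t}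
           \<le> min (exp (- ((1 - t)^2 * real N))) ((sqrt (pi * exp 1 * t) / 2) ^ N)"
  using bound1[OF assms] bound2[OF assms] by simp

end
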